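(* Let $k=\mathbb{F}_q$ with $q=2^m\geq 4$ and $n\geq 1$. Suppose $\sigma\in\mathrm{PGL}_{n+1}(k)$ induces a permutation of $\mathbb{P}^n(k)$ of order $2^r$, and for $i=0,\dots,r$ let $c_i$ be the number of $2^i$-cycles in its cycle decomposition (so $c_0$ is the number of fixed points). Then $c_0$ is odd and $c_1+\cdots+c_r$ is even. Moreover, if $n=1$, then exactly one of the following holds: (1) $c_0=q+1$ and $c_i=0$ for all $1\leq i\leq r$ (i.e. $\sigma$ acts as the identity); (2) $c_0=1$ and there is a unique $1\leq j\leq r$ with $c_j\neq 0$, and this $c_j$ equals $q/2^j>1$. *)

theory Defs
  imports "HOL-Analysis.Analysis"
begin

definition proj_points :: "('k::field ^ 'n) set set" where
  "proj_points = {{c *s v | c. c \<noteq> 0} | v. v \<noteq> 0}"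

text \<open>The map on projective points induced by a matrix A (an element of GL, hence of PGL).\<close>
definition proj_map :: "'k::field ^ 'n ^ 'n \<Rightarrow> ('k ^ 'n) set \<Rightarrow> ('k ^ 'n) set" where
  "proj_map A P = (\<lambda>v. A *v v) ` P"

definition perm_order :: "('a \<Rightarrow> 'a) \<Rightarrow> 'a set \<Rightarrow> nat" where
  "perm_order f S = (LEAST k. k > 0 \<and> (\<forall>x\<in>S. (f ^^ k) x = x))"

definition orbit_of :: "('a \<Rightarrow> 'a) \<Rightarrow> 'a \<Rightarrow> 'a set" where
  "orbit_of f x = {(f ^^ j) x | j. True}"

definition cycle_count :: "('a \<Rightarrow> 'a) \<Rightarrow> 'a set \<Rightarrow> nat \<Rightarrow> nat" where
  "cycle_count f S l = card {C. \<exists>x\<in>S. C = orbit_of f x \<and> card C = l}"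

end

theory Submission
  imports Defs "HOL-Computational_Algebra.Primes"
begin


lemma invol_even:
  assumes "finite S" "\<forall>x\<in>S. g x \<in> S \<and> g (g x) = x \<and> g x \<noteq> x"
  shows "even (card S)"
  using assms
proof (induction "card S" arbitrary: S rule: less_induct)
  case less
  show ?case
  proof (cases "S = {}")
    case True then show ?thesis by simp
  next
    case False
    then obtain x where x: "x \<in> S" by auto
    let ?S' = "S - {x, g x}"
    have gx: "g x \<in> S" "g x \<noteq> x" using x less.prems by auto
    have "card {x, g x} \<le> card S" using x gx less.prems(1) by (intro card_mono) auto
    then have c: "card S = card ?S' + 2"
      using x gx less.prems(1) by (simp add: card_Diff_subset)
    have "even (card ?S')"
    proof (rule less.hyps)
      show "card ?S' < card S" using c by simp
      show "finite ?S'" using less.prems by simp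
      show "\<forall>y\<in>?S'. g y \<in> ?S' \<and> g (g y) = y \<and> g y \<noteq> y"
        using less.prems(2) x by auto metis+
    qed
    then show ?thesis using c by simp
  qed
qed

lemma char2:
  assumes "CARD('k::{field,finite}) = 2 ^ m" "CARD('k) \<ge> 4"
  shows "(x::'k) + x = 0"
proof -
  have "(1::'k) + 1 = 0"
  proof (rule ccontr)
    assume h: "(1::'k) + 1 \<noteq> 0"
    have "even (card (UNIV - {0::'k}))"
    proof (rule invol_even[where g = uminus])
      show "finite (UNIV - {0::'k})" by simp
      show "\<forall>x\<in>UNIV - {0::'k}. - x \<in> UNIV - {0} \<and> - (- x) = x \<and> - x \<noteq> x"
      proof
        fix x :: 'k assume "x \<in> UNIV - {0}"
        then have "x \<noteq> 0" by simp
        moreover have "-x \<noteq> x"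
        proof
          assume "-x = x"
          then have "(1 + 1) * x = 0" by (simp add: distrib_right)
          with h \<open>x \<noteq> 0\<close> show False by simp
        qed
        ultimately show "- x \<in> UNIV - {0} \<and> - (- x) = x \<and> - x \<noteq> x" by simp
      qed
    qed
    moreover have "card (UNIV - {0::'k}) = 2 ^ m - 1"
      using assms(1) by (simp add: card_Diff_subset)
    moreover have "m \<noteq> 0" using assms by (cases m) auto
    ultimately show False by simp
  qed
  then have "(1 + 1) * x = 0" by simp
  then show ?thesis by (simp add: distrib_right)
qed



lemma sq_inj:
  fixes a b :: "'k::field"
  assumes ch: "\<And>x::'k. x + x = 0" and h: "a^2 = b^2"
  shows "a = b"
proof -
  have e1: "a*b + a*b = 0" "b^2 + b^2 = 0" using ch by auto
  have "(a - b)^2 = 0" using e1 h by algebra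
  then show ?thesis by simp
qed

lemma frob_inj:
  fixes a b :: "'k::field"
  assumes ch: "\<And>x::'k. x + x = 0"
  shows "a^(2^k) = b^(2^k) \<Longrightarrow> a = b"
proof (induction k arbitrary: a b)
  case 0 then show ?case by simp
next
  case (Suc k)
  have "(a^2)^(2^k) = (b^2)^(2^k)" using Suc.prems
    by (simp add: power_mult[symmetric] mult.commute)
  then have "a^2 = b^2" by (rule Suc.IH)
  then show ?case using sq_inj[OF ch] by blast
qed

lemma frob_surj:
  fixes b :: "'k::{field,finite}"
  assumes ch: "\<And>x::'k. x + x = 0"
  shows "\<exists>a. a^(2^k) = b"
proof -
  have "inj (\<lambda>a::'k. a^(2^k))" using frob_inj[OF ch] by (auto intro: injI)
  then have "surj (\<lambda>a::'k. a^(2^k))" by (simp add: finite_UNIV_inj_surj)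
  from surjD[OF this, of b] show ?thesis by (elim exE) (rule exI, rule sym)
qed

definition per :: "('a \<Rightarrow> 'a) \<Rightarrow> 'a \<Rightarrow> nat" where
  "per f x = (LEAST k. k > 0 \<and> (f ^^ k) x = x)"

lemma funpow_mult_fix: "(f ^^ p) x = x \<Longrightarrow> (f ^^ (p * j)) x = x"
  by (induction j) (auto simp: funpow_add)

lemma funpow_mod:
  assumes "(f ^^ p) x = x" shows "(f ^^ k) x = (f ^^ (k mod p)) x"
proof -
  have "(f ^^ k) x = (f ^^ (k mod p + p * (k div p))) x" by simp
  also have "\<dots> = (f ^^ (k mod p)) ((f ^^ (p * (k div p))) x)" by (simp only: funpow_add comp_apply)
  also have "\<dots> = (f ^^ (k mod p)) x" using funpow_mult_fix[OF assms] by simp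
  finally show ?thesis .
qed

lemma per_basic:
  assumes "M > 0" "(f ^^ M) x = x"
  shows "per f x > 0" "(f ^^ per f x) x = x"
  using LeastI[of "\<lambda>k. k > 0 \<and> (f ^^ k) x = x" M] assms unfolding per_def by auto

lemma per_dvd:
  assumes "M > 0" "(f ^^ M) x = x"
  shows "(f ^^ k) x = x \<longleftrightarrow> per f x dvd k"
proof
  assume h: "(f ^^ k) x = x"
  have p: "per f x > 0" "(f ^^ per f x) x = x" using per_basic[OF assms] by auto
  have "(f ^^ (k mod per f x)) x = x" using funpow_mod[OF p(2), of k] h by simp
  moreover have "k mod per f x < per f x" using p by simp
  moreover have "per f x = (LEAST k. k > 0 \<and> (f ^^ k) x = x)" by (simp add: per_def)
  ultimately have "\<not> (k mod per f x > 0 \<and> (f ^^ (k mod per f x)) x = x)"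
    using not_less_Least[of "k mod per f x" "\<lambda>k. k > 0 \<and> (f ^^ k) x = x"] by simp
  then have "\<not> (k mod per f x > 0)" using \<open>(f ^^ (k mod per f x)) x = x\<close> by simp
  then show "per f x dvd k" by auto
next
  assume "per f x dvd k"
  then obtain j where "k = per f x * j" by auto
  then show "(f ^^ k) x = x" using funpow_mult_fix per_basic[OF assms] by metis
qed

lemma orbit_repr:
  assumes "M > 0" "(f ^^ M) x = x"
  shows "orbit_of f x = (\<lambda>j. (f ^^ j) x) ` {..<per f x}"
proof -
  have p: "per f x > 0" "(f ^^ per f x) x = x" using per_basic[OF assms] by auto
  show ?thesis unfolding orbit_of_def
  proof (intro equalityI subsetI)
    fix y assume "y \<in> {(f ^^ j) x |j. True}"
    then obtain j where "y = (f ^^ j) x" by auto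
    then have "y = (f ^^ (j mod per f x)) x" using funpow_mod[OF p(2)] by simp
    then show "y \<in> (\<lambda>j. (f ^^ j) x) ` {..<per f x}" using p(1) by auto
  qed auto
qed

lemma orbit_inj_aux:
  assumes "M > 0" "(f ^^ M) x = x"
    and ab: "a < per f x" "b < per f x" "(f ^^ a) x = (f ^^ b) x" "a < b"
  shows False
proof -
  have p: "per f x > 0" "(f ^^ per f x) x = x" using per_basic[OF assms(1,2)] by auto
  have "(f ^^ (per f x - b + a)) x = (f ^^ (per f x - b)) ((f ^^ a) x)" by (simp add: funpow_add)
  also have "\<dots> = (f ^^ (per f x - b)) ((f ^^ b) x)" using ab by simp
  also have "\<dots> = (f ^^ (per f x - b + b)) x" by (simp add: funpow_add)
  also have "\<dots> = x" using ab p by simp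
  finally have e: "(f ^^ (per f x - b + a)) x = x" .
  have d: "per f x dvd (per f x - b + a)" using per_dvd[OF assms(1,2), of "per f x - b + a"] e by simp
  have "0 < per f x - b + a" "per f x - b + a < per f x" using ab by auto
  then show False using nat_dvd_not_less[of "per f x - b + a" "per f x"] d by simp
qed

lemma orbit_card:
  assumes "M > 0" "(f ^^ M) x = x"
  shows "card (orbit_of f x) = per f x"
proof -
  have "inj_on (\<lambda>j. (f ^^ j) x) {..<per f x}"
  proof (rule inj_onI, rule ccontr)
    fix a b assume ab: "a \<in> {..<per f x}" "b \<in> {..<per f x}" "(f ^^ a) x = (f ^^ b) x" "a \<noteq> b"
    show False
    proof (cases "a < b")
      case True then show ?thesis using orbit_inj_aux[OF assms, of a b] ab by simp
    next
      case False then have "b < a" using ab(4) by simp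
      then show ?thesis using orbit_inj_aux[OF assms, of b a] ab by simp
    qed
  qed
  then show ?thesis using orbit_repr[OF assms] by (simp add: card_image)
qed

lemma orbit_sub:
  assumes "f ` S \<subseteq> S" "x \<in> S" shows "orbit_of f x \<subseteq> S"
proof -
  have "(f ^^ j) x \<in> S" for j by (induction j) (use assms in auto)
  then show ?thesis unfolding orbit_of_def by auto
qed

lemma orbit_self: "x \<in> orbit_of f x"
  unfolding orbit_of_def by (auto intro: exI[of _ 0])

lemma orbit_same:
  assumes "M > 0" "(f ^^ M) x = x" "y \<in> orbit_of f x"
  shows "orbit_of f y = orbit_of f x"
proof -
  obtain j where j: "y = (f ^^ j) x" using assms(3) unfolding orbit_of_def by auto
  have p: "per f x > 0" "(f ^^ per f x) x = x" using per_basic[OF assms(1,2)] by auto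
  have "(f ^^ (per f x * j - j)) y = x"
  proof -
    have "per f x * j \<ge> j" using p by simp
    have "(f ^^ (per f x * j - j)) y = (f ^^ (per f x * j - j + j)) x"
      by (simp only: j funpow_add comp_apply)
    then have "(f ^^ (per f x * j - j)) y = (f ^^ (per f x * j)) x"
      using \<open>per f x * j \<ge> j\<close> by simp
    then show ?thesis using funpow_mult_fix[OF p(2)] by simp
  qed
  then obtain i where i: "x = (f ^^ i) y" by metis
  have "orbit_of f y \<subseteq> orbit_of f x"
  proof
    fix z assume "z \<in> orbit_of f y"
    then obtain k where "z = (f ^^ k) y" unfolding orbit_of_def by auto
    then have "z = (f ^^ (k + j)) x" by (simp add: j funpow_add)
    then show "z \<in> orbit_of f x" unfolding orbit_of_def by blast
  qed
  moreover have "orbit_of f x \<subseteq> orbit_of f y"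
  proof
    fix z assume "z \<in> orbit_of f x"
    then obtain k where "z = (f ^^ k) x" unfolding orbit_of_def by auto
    then have "z = (f ^^ (k + i)) y" by (simp add: i funpow_add)
    then show "z \<in> orbit_of f y" unfolding orbit_of_def by blast
  qed
  ultimately show ?thesis by auto
qed

lemma cycle_count_mult:
  assumes fin: "finite S" and inv: "f ` S \<subseteq> S" and M: "M > 0" "\<forall>x\<in>S. (f ^^ M) x = x"
  shows "l * cycle_count f S l = card {x\<in>S. card (orbit_of f x) = l}"
proof -
  let ?C = "{C. \<exists>x\<in>S. C = orbit_of f x \<and> card C = l}"
  have U: "\<Union>?C = {x\<in>S. card (orbit_of f x) = l}"
  proof (intro equalityI subsetI)
    fix y assume "y \<in> \<Union>?C"
    then obtain x where x: "x \<in> S" "card (orbit_of f x) = l" "y \<in> orbit_of f x" by auto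
    have "orbit_of f y = orbit_of f x"
      using orbit_same[OF M(1) M(2)[rule_format, OF x(1)] x(3)] .
    moreover have "y \<in> S" using orbit_sub[OF inv x(1)] x(3) by blast
    ultimately show "y \<in> {x\<in>S. card (orbit_of f x) = l}" using x(2) by simp
  next
    fix y assume y: "y \<in> {x\<in>S. card (orbit_of f x) = l}"
    then have "orbit_of f y \<in> ?C" by auto
    then show "y \<in> \<Union>?C" using orbit_self[of y f] by (rule UnionI)
  qed
  have disj: "pairwise disjnt ?C"
  proof (rule pairwiseI)
    fix A B assume "A \<in> ?C" "B \<in> ?C" "A \<noteq> B"
    then obtain x y where xy: "x \<in> S" "y \<in> S" "A = orbit_of f x" "B = orbit_of f y" by auto
    show "disjnt A B"
    proof (rule ccontr)
      assume "\<not> disjnt A B"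
      then obtain z where z: "z \<in> A" "z \<in> B" unfolding disjnt_def by auto
      have "orbit_of f z = A"
        using orbit_same[OF M(1) M(2)[rule_format, OF xy(1)]] z(1) xy(3) by simp
      moreover have "orbit_of f z = B"
        using orbit_same[OF M(1) M(2)[rule_format, OF xy(2)]] z(2) xy(4) by simp
      ultimately show False using \<open>A \<noteq> B\<close> by simp
    qed
  qed
  have "card (\<Union>?C) = sum card ?C"
  proof (rule card_Union_disjoint[OF disj])
    fix A assume "A \<in> ?C"
    then obtain x where "x \<in> S" "A = orbit_of f x" by auto
    then have "A \<subseteq> S" using orbit_sub[OF inv] by auto
    then show "finite A" using fin finite_subset by auto
  qed
  also have "\<dots> = sum (\<lambda>_. l) ?C" by (rule sum.cong) auto
  also have "\<dots> = l * card ?C" by simp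
  finally show ?thesis using U unfolding cycle_count_def by simp
qed




lemma mv_scale: "(A::'k::field^'n^'m) *v (c *s x) = c *s (A *v x)"
  by (simp add: vec_eq_iff matrix_vector_mult_def sum_distrib_left algebra_simps)

lemma mv_mat: "mat (c::'k::field) *v (x::'k^'n) = c *s x"
  apply (vector matrix_vector_mult_def mat_def)
  apply (simp add: if_distrib if_distribR cong del: if_weak_cong)
  done

lemma mvp_add: "(((*v) (A::'k::field^'n^'n)) ^^ k) (x + y) = (((*v) A) ^^ k) x + (((*v) A) ^^ k) y"
  by (induction k) (simp_all add: matrix_vector_right_distrib)

lemma mvp_diff: "(((*v) (A::'k::field^'n^'n)) ^^ k) (x - y) = (((*v) A) ^^ k) x - (((*v) A) ^^ k) y"
  by (induction k) (simp_all add: matrix_vector_mult_diff_distrib)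

lemma mvp_scale: "(((*v) (A::'k::field^'n^'n)) ^^ k) (c *s x) = c *s (((*v) A) ^^ k) x"
  by (induction k) (simp_all add: mv_scale)

lemma mvp_zero: "(((*v) (A::'k::field^'n^'n)) ^^ k) 0 = 0"
  by (induction k) simp_all

lemma mvp_sum: "(((*v) (A::'k::field^'n^'n)) ^^ k) (sum h S) = sum (\<lambda>i. (((*v) A) ^^ k) (h i)) S"
  by (induction S rule: infinite_finite_induct) (simp_all add: mvp_zero mvp_add)

lemma grp_aux: "(b::'a::ab_group_add) + b = 0 \<Longrightarrow> c + c = 0 \<Longrightarrow> a - b - (b - c) = a - c"
proof -
  assume h: "b + b = 0" "c + c = 0"
  have "a - b - (b - c) = a - c - (b + b) + (c + c)" by (simp add: algebra_simps)
  then show ?thesis using h by simp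
qed

lemma chv: "(\<And>x::'k::field. x + x = 0) \<Longrightarrow> (v::'k^'n) + v = 0"
  by (simp add: vec_eq_iff)

lemma T_sq:
  fixes S :: "'k::field^'n \<Rightarrow> 'k^'n"
  assumes ch: "\<And>x::'k. x + x = 0"
    and lin1: "\<And>x y. S (x - y) = S x - S y" and lin2: "\<And>c x. S (c *s x) = c *s S x"
  shows "S (S w - \<mu> *s w) - \<mu> *s (S w - \<mu> *s w) = S (S w) - (\<mu>^2) *s w"
proof -
  have "S (S w - \<mu> *s w) - \<mu> *s (S w - \<mu> *s w) = S (S w) - \<mu> *s S w - (\<mu> *s S w - (\<mu>^2) *s w)"
    by (simp add: lin1 lin2 vector_ssub_ldistrib vector_smult_assoc power2_eq_square)
  also have "\<dots> = S (S w) - (\<mu>^2) *s w"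
    by (rule grp_aux) (simp_all add: chv[OF ch])
  finally show ?thesis .
qed

lemma T_pow:
  fixes A :: "'k::field^'n^'n"
  assumes ch: "\<And>x::'k. x + x = 0"
  shows "(((*v) (A - mat \<nu>)) ^^ (2^i)) w = (((*v) A) ^^ (2^i)) w - (\<nu>^(2^i)) *s w"
proof (induction i arbitrary: w)
  case 0
  then show ?case by (simp add: matrix_vector_mult_diff_rdistrib mv_mat)
next
  case (Suc i)
  let ?S = "((*v) A) ^^ (2^i)"
  have "(((*v) (A - mat \<nu>)) ^^ (2^Suc i)) w = (((*v) (A - mat \<nu>)) ^^ (2^i)) ((((*v) (A - mat \<nu>)) ^^ (2^i)) w)"
    by (simp only: power_Suc mult_2 funpow_add comp_apply)
  also have "\<dots> = ?S (?S w - (\<nu>^(2^i)) *s w) - (\<nu>^(2^i)) *s (?S w - (\<nu>^(2^i)) *s w)"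
    by (simp add: Suc.IH)
  also have "\<dots> = ?S (?S w) - ((\<nu>^(2^i))^2) *s w"
    by (rule T_sq[OF ch]) (simp_all add: mvp_diff mvp_scale)
  also have "\<dots> = (((*v) A) ^^ (2^Suc i)) w - (\<nu>^(2^Suc i)) *s w"
    by (simp only: power_Suc mult_2 funpow_add comp_apply power_add power2_eq_square)
  finally show ?case .
qed

definition line :: "'k::field^'n \<Rightarrow> ('k^'n) set" where
  "line v = {c *s v | c. c \<noteq> 0}"

lemma proj_points_line: "proj_points = line ` (UNIV - {0})"
  unfolding proj_points_def line_def by auto

lemma line_self: "v \<in> line v"
  unfolding line_def by (auto intro!: exI[of _ 1])

lemma line_scale: "c \<noteq> 0 \<Longrightarrow> line (c *s v) = line v"
  unfolding line_def
proof (intro equalityI subsetI)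
  fix x assume "c \<noteq> 0" "x \<in> {d *s (c *s v) |d. d \<noteq> 0}"
  then show "x \<in> {d *s v |d. d \<noteq> (0::'a)}" by (auto simp: vector_smult_assoc)
next
  fix x assume c: "c \<noteq> 0" and "x \<in> {d *s v |d. d \<noteq> 0}"
  then obtain d where d: "d \<noteq> 0" "x = d *s v" by auto
  then have "x = (d / c) *s (c *s v)" using c by (simp add: vector_smult_assoc)
  moreover have "d / c \<noteq> 0" using c d by simp
  ultimately show "x \<in> {d *s (c *s v) |d. d \<noteq> 0}" by blast
qed

lemma line_eq_iff: "line w = line v \<longleftrightarrow> (\<exists>c. c \<noteq> 0 \<and> w = c *s v)"
proof
  assume "line w = line v"
  then have "w \<in> line v" using line_self by metis
  then show "\<exists>c. c \<noteq> 0 \<and> w = c *s v" unfolding line_def by auto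
next
  assume "\<exists>c. c \<noteq> 0 \<and> w = c *s v"
  then show "line w = line v" using line_scale by auto
qed

lemma line_inter: "x \<in> line v \<Longrightarrow> x \<in> line w \<Longrightarrow> line v = line w"
proof -
  assume "x \<in> line v" "x \<in> line w"
  then obtain c d where "c \<noteq> 0" "x = c *s v" "d \<noteq> 0" "x = d *s w" unfolding line_def by blast
  then have "line x = line v" "line x = line w" using line_scale by metis+
  then show ?thesis by simp
qed

lemma line_card:
  assumes "v \<noteq> 0" shows "card (line (v::'k::{field,finite}^'n)) = CARD('k) - 1"
proof -
  have "line v = (\<lambda>c. c *s v) ` (UNIV - {0})" unfolding line_def by auto
  moreover have "inj_on (\<lambda>c. c *s v) (UNIV - {0})"
  proof (rule inj_onI)
    fix a b assume "a *s v = b *s v"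
    then have "(a - b) *s v = 0" by (simp add: vector_sub_rdistrib)
    then show "a = b" using assms by simp
  qed
  ultimately show ?thesis by (simp add: card_image card_Diff_subset)
qed

lemma proj_map_line: "proj_map A (line v) = line (A *v v)"
proof -
  have "(*v) A ` {c *s v |c. c \<noteq> 0} = (\<lambda>c. c *s (A *v v)) ` (UNIV - {0})"
  proof (intro equalityI subsetI)
    fix y assume "y \<in> (*v) A ` {c *s v |c. c \<noteq> 0}"
    then obtain c where "c \<noteq> 0" "y = A *v (c *s v)" by auto
    then show "y \<in> (\<lambda>c. c *s (A *v v)) ` (UNIV - {0})" by (simp add: mv_scale image_iff) blast
  next
    fix y assume "y \<in> (\<lambda>c. c *s (A *v v)) ` (UNIV - {0})"
    then obtain c where "c \<noteq> 0" "y = A *v (c *s v)" by (auto simp: mv_scale)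
    then show "y \<in> (*v) A ` {c *s v |c. c \<noteq> 0}" by blast
  qed
  also have "\<dots> = {c *s (A *v v) |c. c \<noteq> 0}" by auto
  finally show ?thesis unfolding proj_map_def line_def .
qed

lemma proj_map_pow_line: "((proj_map A) ^^ k) (line v) = line ((((*v) A) ^^ k) v)"
  by (induction k) (simp_all add: proj_map_line)

definition lsub :: "('k::field^'n) set \<Rightarrow> bool" where
  "lsub W \<longleftrightarrow> 0 \<in> W \<and> (\<forall>x\<in>W. \<forall>y\<in>W. x + y \<in> W) \<and> (\<forall>c. \<forall>x\<in>W. c *s x \<in> W)"

lemma lines_in_sub:
  fixes W :: "('k::{field,finite}^'n) set"
  assumes "lsub W"
  shows "(CARD('k) - 1) * card {P\<in>proj_points. P \<subseteq> W} = card W - 1"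
proof -
  let ?C = "{P\<in>proj_points. P \<subseteq> W}"
  have U: "\<Union>?C = W - {0}"
  proof (intro equalityI subsetI)
    fix x assume "x \<in> \<Union>?C"
    then obtain v where "v \<noteq> 0" "x \<in> line v" "line v \<subseteq> W" unfolding proj_points_line by auto
    then show "x \<in> W - {0}" unfolding line_def by auto
  next
    fix x assume x: "x \<in> W - {0}"
    have "line x \<subseteq> W" using x assms unfolding line_def lsub_def by auto
    then have "line x \<in> ?C" using x unfolding proj_points_line by auto
    then show "x \<in> \<Union>?C" using line_self by blast
  qed
  have disj: "pairwise disjnt ?C"
  proof (rule pairwiseI)
    fix P Q assume "P \<in> ?C" "Q \<in> ?C" "P \<noteq> Q"
    then obtain v w where "P = line v" "Q = line w" unfolding proj_points_line by auto
    then show "disjnt P Q" using line_inter \<open>P \<noteq> Q\<close> unfolding disjnt_def by blast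
  qed
  have "card (\<Union>?C) = sum card ?C"
    by (rule card_Union_disjoint[OF disj]) simp
  also have "\<dots> = sum (\<lambda>_. CARD('k) - 1) ?C"
  proof (rule sum.cong)
    fix P assume "P \<in> ?C"
    then obtain v where "v \<noteq> 0" "P = line v" unfolding proj_points_line by auto
    then show "card P = CARD('k) - 1" using line_card by simp
  qed simp
  also have "\<dots> = (CARD('k) - 1) * card ?C" by simp
  finally show ?thesis using U assms unfolding lsub_def by (simp add: card_Diff_subset)
qed

definition ext :: "('k::field^'n) set \<Rightarrow> 'k^'n \<Rightarrow> ('k^'n) set" where
  "ext W w = {x + c *s w | x c. x \<in> W}"

lemma ext_lsub:
  assumes "lsub W" shows "lsub (ext W w)"
  unfolding lsub_def
proof (intro conjI ballI allI)
  show "0 \<in> ext W w" using assms unfolding ext_def lsub_def by (auto intro!: exI[of _ 0])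
next
  fix a b assume "a \<in> ext W w" "b \<in> ext W w"
  then obtain x c y d where "x \<in> W" "y \<in> W" "a = x + c *s w" "b = y + d *s w" unfolding ext_def by auto
  then have "a + b = (x + y) + (c + d) *s w" "x + y \<in> W" using assms unfolding lsub_def
    by (auto simp: vector_sadd_rdistrib algebra_simps)
  then show "a + b \<in> ext W w" unfolding ext_def by blast
next
  fix e a assume "a \<in> ext W w"
  then obtain x c where "x \<in> W" "a = x + c *s w" unfolding ext_def by auto
  then have "e *s a = e *s x + (e * c) *s w" "e *s x \<in> W" using assms unfolding lsub_def
    by (auto simp: vector_add_ldistrib vector_smult_assoc)
  then show "e *s a \<in> ext W w" unfolding ext_def by blast
qed

lemma ext_card:
  fixes W :: "('k::{field,finite}^'n) set"
  assumes "lsub W" "w \<notin> W" shows "card (ext W w) = card W * CARD('k)"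
proof -
  have "ext W w = (\<lambda>(x, c). x + c *s w) ` (W \<times> UNIV)" unfolding ext_def by auto
  moreover have "inj_on (\<lambda>(x, c). x + c *s w) (W \<times> UNIV)"
  proof (rule inj_onI, clarify)
    fix x c y d assume xy: "x \<in> W" "y \<in> W" and e: "x + c *s w = y + d *s w"
    show "x = y \<and> c = d"
    proof (cases "c = d")
      case True then show ?thesis using e by simp
    next
      case False
      have "(c - d) *s w = (x + c *s w) - (x + d *s w)" by (simp add: vector_sub_rdistrib)
      also have "\<dots> = (y + d *s w) - (x + d *s w)" by (simp only: e)
      also have "\<dots> = y - x" by simp
      finally have h: "(c - d) *s w = y - x" .
      have "(1 / (c - d)) * (c - d) = 1" using False by simp
      then have "w = ((1 / (c - d)) * (c - d)) *s w" by simp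
      then have "w = (1 / (c - d)) *s ((c - d) *s w)" by (simp only: vector_smult_assoc)
      then have "w = (1 / (c - d)) *s (y - x)" by (simp only: h)
      moreover have "y - x \<in> W"
      proof -
        have "(-1) *s x \<in> W" using assms(1) xy unfolding lsub_def by blast
        then have "y + (-1) *s x \<in> W" using assms(1) xy unfolding lsub_def by blast
        then show ?thesis by (simp add: vector_sneg_minus1[symmetric])
      qed
      ultimately have "w \<in> W" using assms(1) unfolding lsub_def by metis
      then show ?thesis using assms by simp
    qed
  qed
  ultimately show ?thesis by (simp add: card_image card_cartesian_product)
qed

lemma ext_sub: "lsub S \<Longrightarrow> W \<subseteq> S \<Longrightarrow> w \<in> S \<Longrightarrow> ext W w \<subseteq> S"
  unfolding ext_def lsub_def by blast

lemma ext_super: "lsub W \<Longrightarrow> W \<subseteq> ext W w"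
proof
  fix x assume "x \<in> W"
  moreover have "x = x + 0 *s w" by simp
  ultimately show "x \<in> ext W w" unfolding ext_def by blast
qed

lemma ext_mem: "lsub W \<Longrightarrow> w \<in> ext W w"
proof -
  assume "lsub W"
  then have "0 \<in> W" unfolding lsub_def by simp
  moreover have "w = 0 + 1 *s w" by simp
  ultimately show "w \<in> ext W w" unfolding ext_def by blast
qed

lemma sub_card:
  fixes S W :: "('k::{field,finite}^'n) set"
  assumes "lsub S" "lsub W" "W \<subseteq> S"
  shows "\<exists>e. card S = card W * CARD('k) ^ e \<and> (W \<noteq> S \<longrightarrow> e \<ge> 1)"
  using assms(2,3)
proof (induction "card (S - W)" arbitrary: W rule: less_induct)
  case less
  show ?case
  proof (cases "W = S")
    case True then show ?thesis by (intro exI[of _ 0]) simp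
  next
    case False
    then obtain w where w: "w \<in> S" "w \<notin> W" using less.prems by auto
    let ?W = "ext W w"
    have l: "lsub ?W" using ext_lsub[OF less.prems(1)] .
    have sub: "?W \<subseteq> S" using ext_sub[OF assms(1) less.prems(2) w(1)] .
    have s1: "W \<subseteq> ?W" "w \<in> ?W" using ext_super[OF less.prems(1)] ext_mem[OF less.prems(1)] by auto
    have "S - ?W \<subseteq> S - W" using s1(1) by auto
    moreover have "w \<in> S - W" "w \<notin> S - ?W" using w s1(2) by auto
    ultimately have "S - ?W \<subset> S - W" by blast
    then have "card (S - ?W) < card (S - W)" by (simp add: psubset_card_mono)
    from less.hyps[OF this l sub] obtain e where e: "card S = card ?W * CARD('k) ^ e" by blast
    then have "card S = card W * CARD('k) ^ (Suc e)"
      using ext_card[OF less.prems(1) w(2)] by simp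
    then show ?thesis by (intro exI[of _ "Suc e"]) simp
  qed
qed

lemma zero_lsub: "lsub {0::'k::field^'n}"
  unfolding lsub_def by simp

lemma univ_lsub: "lsub (UNIV :: ('k::field^'n) set)"
  unfolding lsub_def by simp

definition kern :: "'k::field^'n^'n \<Rightarrow> nat \<Rightarrow> ('k^'n) set" where
  "kern M j = {v. (((*v) M) ^^ j) v = 0}"

lemma kern_lsub: "lsub (kern M j)"
  unfolding lsub_def kern_def by (simp add: mvp_zero mvp_add mvp_scale)

lemma kern_0: "kern M 0 = {0}"
  unfolding kern_def by auto

lemma kern_mono: "kern M j \<subseteq> kern M (j + l)"
proof
  fix v assume "v \<in> kern M j"
  then have h: "(((*v) M) ^^ j) v = 0" unfolding kern_def by simp
  have "(((*v) M) ^^ (j + l)) v = (((*v) M) ^^ l) ((((*v) M) ^^ j) v)"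
    by (simp only: add.commute[of j l] funpow_add comp_apply)
  then show "v \<in> kern M (j + l)" using h unfolding kern_def by (simp add: mvp_zero)
qed

lemma kern_mono': "j \<le> j' \<Longrightarrow> kern M j \<subseteq> kern M j'"
  using kern_mono[of M j "j' - j"] by simp

lemma kern_stab:
  assumes "kern M a = kern M (Suc a)"
  shows "kern M (a + l) = kern M a"
proof (induction l)
  case 0 then show ?case by simp
next
  case (Suc l)
  have "kern M (a + Suc l) \<subseteq> kern M (a + l)"
  proof
    fix v assume "v \<in> kern M (a + Suc l)"
    then have "(((*v) M) ^^ (Suc a + l)) v = 0" unfolding kern_def by simp
    then have "(((*v) M) ^^ (Suc a)) ((((*v) M) ^^ l) v) = 0"
      by (simp only: funpow_add comp_apply)
    then have "(((*v) M) ^^ l) v \<in> kern M a" using assms unfolding kern_def by auto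
    then have "(((*v) M) ^^ a) ((((*v) M) ^^ l) v) = 0" unfolding kern_def by simp
    then have "(((*v) M) ^^ (a + l)) v = 0" by (simp only: funpow_add comp_apply)
    then show "v \<in> kern M (a + l)" unfolding kern_def by simp
  qed
  then show ?case using Suc kern_mono[of M "a + l" 1] by auto
qed

lemma scalar_from_eigen:
  fixes M :: "'k::field^'n^'n"
  assumes ev: "\<forall>v. v \<noteq> 0 \<longrightarrow> (\<exists>lm. (((*v) M) ^^ k) v = lm *s v)"
  shows "\<exists>\<mu>. \<forall>v. (((*v) M) ^^ k) v = \<mu> *s v"
proof -
  let ?g = "((*v) M) ^^ k"
  define lam where "lam i = (SOME lm. ?g (axis i 1) = lm *s axis i (1::'k))" for i
  have lam: "?g (axis i 1) = lam i *s axis i 1" for i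
  proof -
    have "axis i (1::'k) \<noteq> 0" by (simp add: axis_eq_0_iff)
    then show ?thesis using ev unfolding lam_def by (metis (mono_tags, lifting) someI_ex)
  qed
  have eq: "lam i = lam j" for i j
  proof (cases "i = j")
    case False
    have nz: "axis i (1::'k) + axis j 1 \<noteq> 0"
    proof
      assume "axis i (1::'k) + axis j 1 = 0"
      then have "(axis i (1::'k) + axis j 1) $ i = 0" by simp
      then show False using False by (simp add: axis_def)
    qed
    then obtain l where l: "?g (axis i 1 + axis j 1) = l *s (axis i 1 + axis j 1)" using ev by blast
    then have "lam i *s axis i 1 + lam j *s axis j 1 = l *s (axis i 1 + axis j (1::'k))"
      by (simp add: mvp_add lam)
    then have "(lam i *s axis i 1 + lam j *s axis j 1) $ i = (l *s (axis i 1 + axis j (1::'k))) $ i"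
      "(lam i *s axis i 1 + lam j *s axis j 1) $ j = (l *s (axis i 1 + axis j (1::'k))) $ j"
      by simp_all
    then have "lam i = l" "lam j = l" using False by (simp_all add: axis_def)
    then show ?thesis by simp
  qed simp
  define \<mu> where "\<mu> = lam undefined"
  have lm: "lam i = \<mu>" for i unfolding \<mu>_def by (rule eq)
  have "?g v = \<mu> *s v" for v
  proof -
    have "?g v = ?g (sum (\<lambda>i. (v$i) *s axis i 1) UNIV)" by (simp add: basis_expansion)
    also have "\<dots> = sum (\<lambda>i. (v$i) *s (lam i *s axis i 1)) UNIV" by (simp add: mvp_sum mvp_scale lam)
    also have "\<dots> = sum (\<lambda>i. \<mu> *s ((v$i) *s axis i 1)) UNIV"
      by (simp add: vector_smult_assoc mult.commute lm)
    also have "\<dots> = \<mu> *s sum (\<lambda>i. (v$i) *s axis i 1) UNIV"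
      by (simp add: vec_eq_iff sum_distrib_left mult.assoc)
    also have "\<dots> = \<mu> *s v" by (simp add: basis_expansion)
    finally show ?thesis .
  qed
  then show ?thesis by blast
qed



lemma even_ci:
  fixes Q m i c d e :: nat
  assumes h: "(Q - 1) * (2^i * c) = Q^d * (Q^e - 1)" and Q: "Q = 2^m" and m: "m \<ge> 2"
    and di: "d \<ge> i" and i: "i \<ge> 1"
  shows "even c"
proof -
  have "m * d \<ge> i + 1" using m di i
    by (metis add_le_mono le_add1 le_trans mult_2 mult_le_mono1 one_add_one)
  then have "(2::nat)^(i+1) dvd 2^(m*d)" by (rule le_imp_power_dvd)
  moreover have "Q^d = 2^(m*d)" using Q by (simp add: power_mult)
  ultimately have "2^(i+1) dvd Q^d" by simp
  then have "2^(i+1) dvd (Q - 1) * (2^i * c)" using h by simp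
  moreover have "odd (Q - 1)" using Q m by (cases m) auto
  then have "coprime (2^(i+1)) (Q - 1)" by simp
  ultimately have "2^(i+1) dvd 2^i * c" using coprime_dvd_mult_right_iff by blast
  then have "2^i * 2 dvd 2^i * c" by simp
  then show ?thesis using mult_dvd_mono nat_mult_dvd_cancel_disj by auto
qed

lemma odd_c0:
  fixes Q m c d :: nat
  assumes h: "(Q - 1) * c = Q^d - 1" and Q: "Q = 2^m" and m: "m \<ge> 2" and d: "d \<ge> 1"
  shows "odd c"
proof -
  have "even (Q^d)" using Q m d by (simp add: power_mult[symmetric])
  moreover have "Q^d \<ge> 1" using Q by simp
  ultimately have "odd (Q^d - 1)" by presburger
  then show ?thesis using h by (metis even_mult_iff)
qed

lemma vec_scale_cancel: "v \<noteq> 0 \<Longrightarrow> a *s v = b *s (v::'k::field^'n) \<Longrightarrow> a = b"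
proof -
  assume "v \<noteq> 0" "a *s v = b *s v"
  then have "(a - b) *s v = 0" by (simp add: vector_sub_rdistrib)
  then show "a = b" using \<open>v \<noteq> 0\<close> by simp
qed

lemma mvp_iter_eig:
  assumes "(((*v) (A::'k::field^'n^'n)) ^^ p) v = c *s v"
  shows "(((*v) A) ^^ (p * j)) v = (c ^ j) *s v"
proof (induction j)
  case 0 then show ?case by simp
next
  case (Suc j)
  have "(((*v) A) ^^ (p * Suc j)) v = (((*v) A) ^^ (p * j)) ((((*v) A) ^^ p) v)"
    by (simp only: mult_Suc_right add.commute[of p] funpow_add comp_apply)
  also have "\<dots> = c *s (c ^ j *s v)" using assms Suc.IH by (simp add: mvp_scale)
  finally show ?case by (simp add: vector_smult_assoc mult.commute)
qed

lemma finite_order: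
  fixes f :: "'a::finite \<Rightarrow> 'a"
  assumes "inj f"
  shows "\<exists>k>0. f ^^ k = id"
proof -
  have "\<not> inj (\<lambda>k::nat. f ^^ k)"
  proof
    assume "inj (\<lambda>k::nat. f ^^ k)"
    moreover have "finite (range (\<lambda>k::nat. f ^^ k))" by simp
    ultimately have "finite (UNIV :: nat set)" using finite_imageD by blast
    then show False by simp
  qed
  then obtain a b :: nat where ab: "a \<noteq> b" "f ^^ a = f ^^ b" unfolding inj_def by blast
  have "\<exists>a b. a < b \<and> f ^^ a = f ^^ b"
  proof (cases "a < b")
    case True then show ?thesis using ab by blast
  next
    case False then have "b < a" using ab by simp
    then show ?thesis using ab by metis
  qed
  then obtain a b where ab: "a < b" "f ^^ a = f ^^ b" by blast
  have "f ^^ (b - a) = id"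
  proof
    fix x
    have "(f ^^ a) ((f ^^ (b - a)) x) = (f ^^ (a + (b - a))) x"
      by (simp only: funpow_add comp_apply)
    also have "a + (b - a) = b" using ab(1) by simp
    finally have "(f ^^ a) ((f ^^ (b - a)) x) = (f ^^ b) x" .
    also have "\<dots> = (f ^^ a) x" using ab(2) by simp
    finally show "(f ^^ (b - a)) x = id x" using inj_fn[OF assms, of a] by (simp add: inj_eq)
  qed
  then show ?thesis using ab(1) by (intro exI[of _ "b - a"]) simp
qed

theorem corollary3p6:
  fixes A :: "'k::{field,finite} ^ 'n ^ 'n" and m r :: nat
  assumes "CARD('k) = 2 ^ m" and "CARD('k) \<ge> 4"
    and "CARD('n) \<ge> 2"
    and "invertible A"
    and "perm_order (proj_map A) proj_points = 2 ^ r"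
  defines "c \<equiv> \<lambda>i::nat. cycle_count (proj_map A) proj_points (2 ^ i)"
  shows "odd (c 0) \<and> even (\<Sum>i\<in>{1..r}. c i) \<and>
    (CARD('n) = 2 \<longrightarrow>
      (let q = CARD('k);
           P1 = (c 0 = q + 1 \<and> (\<forall>i\<in>{1..r}. c i = 0));
           P2 = (c 0 = 1 \<and> (\<exists>!j. j \<in> {1..r} \<and> c j \<noteq> 0) \<and>
                 (\<forall>j\<in>{1..r}. c j \<noteq> 0 \<longrightarrow>
                    real (c j) = real q / 2 ^ j \<and> real q / 2 ^ j > 1))
       in (P1 \<and> \<not> P2) \<or> (\<not> P1 \<and> P2)))"
proof -
  define q where "q = CARD('k)"
  define f where "f = (*v) A"
  define \<sigma> where "\<sigma> = proj_map A"
  define pts where "pts = (proj_points :: ('k^'n) set set)"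
  have ch: "\<And>x::'k. x + x = 0" using char2[OF assms(1,2)] .
  have m2: "m \<ge> 2"
  proof (rule ccontr)
    assume "\<not> m \<ge> 2" then have "m = 0 \<or> m = 1" by auto
    then show False using assms(1,2) by auto
  qed
  have q: "q = 2^m" "q \<ge> 4" using assms(1,2) unfolding q_def by auto
  have injf: "inj f" unfolding f_def by (rule inj_matrix_vector_mult[OF assms(4)])
  have fk0: "(f ^^ k) v \<noteq> 0" if "v \<noteq> 0" for k v
  proof
    assume "(f ^^ k) v = 0"
    then have "(f ^^ k) v = (f ^^ k) 0" unfolding f_def by (simp add: mvp_zero)
    then show False using inj_fn[OF injf, of k] that by (simp add: inj_eq)
  qed
  have pts_line: "pts = line ` (UNIV - {0})" unfolding pts_def by (rule proj_points_line)
  have sig_line: "(\<sigma> ^^ k) (line v) = line ((f ^^ k) v)" for k v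
    unfolding \<sigma>_def f_def by (rule proj_map_pow_line)
  have sig_pts: "\<sigma> ` pts \<subseteq> pts"
  proof
    fix P assume "P \<in> \<sigma> ` pts"
    then obtain v where v: "v \<noteq> 0" "P = \<sigma> (line v)" unfolding pts_line by auto
    then have "P = line (f v)" using sig_line[of 1 v] by simp
    moreover have "f v \<noteq> 0" using fk0[OF v(1), of 1] by simp
    ultimately show "P \<in> pts" unfolding pts_line by auto
  qed
  have fin_pts: "finite pts" by simp
  obtain k0 where k0: "k0 > 0" "f ^^ k0 = id" using finite_order[OF injf] by blast
  have "\<exists>k. k > 0 \<and> (\<forall>P\<in>pts. (\<sigma> ^^ k) P = P)"
  proof (intro exI[of _ k0] conjI ballI)
    fix P assume "P \<in> pts"
    then obtain v where "P = line v" unfolding pts_line by auto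
    then show "(\<sigma> ^^ k0) P = P" using sig_line[of k0 v] k0 by simp
  qed (use k0 in simp)
  then have "(2::nat)^r > 0 \<and> (\<forall>P\<in>pts. (\<sigma> ^^ (2^r)) P = P)"
    using LeastI_ex[of "\<lambda>k. k > 0 \<and> (\<forall>P\<in>pts. (\<sigma> ^^ k) P = P)"] assms(5)
    unfolding perm_order_def \<sigma>_def pts_def by simp
  then have ord: "\<forall>P\<in>pts. (\<sigma> ^^ (2^r)) P = P" by simp
  have "\<forall>v. v \<noteq> 0 \<longrightarrow> (\<exists>lm. (((*v) A) ^^ (2^r)) v = lm *s v)"
  proof (intro allI impI)
    fix v :: "'k^'n" assume v: "v \<noteq> 0"
    then have "line v \<in> pts" unfolding pts_line by auto
    then have "line ((f ^^ (2^r)) v) = line v" using ord sig_line by metis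
    then show "\<exists>lm. (((*v) A) ^^ (2^r)) v = lm *s v" unfolding line_eq_iff f_def by blast
  qed
  from scalar_from_eigen[OF this] obtain \<mu> where mu: "\<And>v. (f ^^ (2^r)) v = \<mu> *s v"
    unfolding f_def by blast
  have e0: "axis undefined (1::'k) \<noteq> (0::'k^'n)" by (simp add: axis_eq_0_iff)
  have mu0: "\<mu> \<noteq> 0"
  proof
    assume "\<mu> = 0"
    then have "(f ^^ (2^r)) (axis undefined 1) = 0" using mu by simp
    then show False using fk0[OF e0] by blast
  qed
  obtain \<nu> where nu: "\<nu> ^ (2^r) = \<mu>" using frob_surj[OF ch] by blast
  have nu0: "\<nu> \<noteq> 0" using nu mu0 by auto
  define B where "B = A - mat \<nu>"
  define G where "G i = kern B (2^i)" for i
  have G_char: "v \<in> G i \<longleftrightarrow> (f ^^ (2^i)) v = (\<nu>^(2^i)) *s v" for i v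
    unfolding G_def kern_def B_def f_def using T_pow[OF ch, where A=A and \<nu>=\<nu> and i=i and w=v] by simp
  have G_lsub: "lsub (G i)" for i unfolding G_def by (rule kern_lsub)
  have Gr: "G r = UNIV" using G_char mu nu by auto
  have Gmono: "i \<le> j \<Longrightarrow> G i \<subseteq> G j" for i j
    unfolding G_def by (rule kern_mono') simp
  have Gstab: "G j = G i" if "G i = G (Suc i)" "i \<le> j" for i j
  proof -
    have "kern B (2^i) \<subseteq> kern B (Suc (2^i))" using kern_mono[of B "2^i" 1] by simp
    moreover have "kern B (Suc (2^i)) \<subseteq> kern B (2^Suc i)" by (rule kern_mono') simp
    ultimately have "kern B (2^i) = kern B (Suc (2^i))" using that(1) unfolding G_def by auto
    from kern_stab[OF this, of "2^j - 2^i"] show ?thesis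
      unfolding G_def using that(2) by (simp add: le_add_diff_inverse)
  qed
  have G0ne: "G 0 \<noteq> {0}"
  proof
    assume h: "G 0 = {0}"
    have "kern B 0 = kern B (Suc 0)" using h kern_0 unfolding G_def by simp
    from kern_stab[OF this, of "2^r"] have "G r = {0}" using h kern_0 unfolding G_def by simp
    then have "axis undefined (1::'k) \<in> {0::'k^'n}" using Gr by auto
    then show False using e0 by simp
  qed
  have Gcard: "\<exists>d. card (G j) = q^d \<and> d \<ge> Suc j" if "\<forall>j'<j. G j' \<noteq> G (Suc j')" for j
    using that
  proof (induction j)
    case 0
    from sub_card[OF G_lsub zero_lsub, of 0] obtain e where
      "card (G 0) = 1 * q^e" "{0} \<noteq> G 0 \<longrightarrow> e \<ge> 1"
      using G_lsub[of 0] unfolding lsub_def q_def by auto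
    then show ?case using G0ne by auto
  next
    case (Suc j)
    then obtain d where d: "card (G j) = q^d" "d \<ge> Suc j" by auto
    from sub_card[OF G_lsub G_lsub Gmono[of j "Suc j"]] obtain e where
      "card (G (Suc j)) = card (G j) * q^e" "G j \<noteq> G (Suc j) \<longrightarrow> e \<ge> 1"
      unfolding q_def by auto
    moreover have "G j \<noteq> G (Suc j)" using Suc.prems by auto
    ultimately show ?case using d by (intro exI[of _ "d + e"]) (simp add: power_add)
  qed
  have line_G: "line v \<subseteq> G i \<longleftrightarrow> v \<in> G i" for v i
  proof
    assume "line v \<subseteq> G i" then show "v \<in> G i" using line_self by blast
  next
    assume "v \<in> G i" then show "line v \<subseteq> G i" using G_lsub[of i] unfolding line_def lsub_def by auto
  qed
  have fix_iff: "(\<sigma> ^^ (2^i)) (line v) = line v \<longleftrightarrow> v \<in> G i" if "i \<le> r" "v \<noteq> 0" for i v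
  proof
    assume "(\<sigma> ^^ (2^i)) (line v) = line v"
    then have "line ((f ^^ (2^i)) v) = line v" using sig_line by simp
    then obtain lm where lm: "(f ^^ (2^i)) v = lm *s v" unfolding line_eq_iff by blast
    have "(f ^^ (2^i * 2^(r-i))) v = (lm ^ (2^(r-i))) *s v"
      using mvp_iter_eig[where A=A and p="2^i" and v=v and c=lm and j="2^(r-i)"] lm unfolding f_def by simp
    moreover have "(2::nat)^i * 2^(r-i) = 2^r" using that(1) by (simp add: power_add[symmetric])
    ultimately have "\<mu> *s v = (lm ^ (2^(r-i))) *s v" using mu by simp
    then have "\<mu> = lm ^ (2^(r-i))" using vec_scale_cancel that(2) by blast
    moreover have "\<mu> = (\<nu>^(2^i)) ^ (2^(r-i))" using nu \<open>(2::nat)^i * 2^(r-i) = 2^r\<close>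
      by (simp add: power_mult[symmetric])
    ultimately have "lm = \<nu>^(2^i)" using frob_inj[OF ch] by metis
    then show "v \<in> G i" using lm G_char by simp
  next
    assume "v \<in> G i"
    then have "(f ^^ (2^i)) v = (\<nu>^(2^i)) *s v" using G_char by simp
    moreover have nz: "\<nu>^(2^i) \<noteq> 0" using nu0 by simp
    ultimately show "(\<sigma> ^^ (2^i)) (line v) = line v" using sig_line line_scale[OF nz] by simp
  qed
  define Fix where "Fix i = {P\<in>pts. (\<sigma> ^^ (2^i)) P = P}" for i
  have Fix_eq: "Fix i = {P\<in>pts. P \<subseteq> G i}" if "i \<le> r" for i
  proof (intro equalityI subsetI)
    fix P assume "P \<in> Fix i"
    then obtain v where "v \<noteq> 0" "P = line v" "(\<sigma> ^^ (2^i)) P = P" unfolding Fix_def pts_line by auto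
    then show "P \<in> {P\<in>pts. P \<subseteq> G i}" using fix_iff[OF that] line_G pts_line by auto
  next
    fix P assume "P \<in> {P\<in>pts. P \<subseteq> G i}"
    then obtain v where "v \<noteq> 0" "P = line v" "P \<subseteq> G i" unfolding pts_line by auto
    then show "P \<in> Fix i" using fix_iff[OF that] line_G pts_line unfolding Fix_def by auto
  qed
  have Fix_card: "(q - 1) * card (Fix i) = card (G i) - 1" if "i \<le> r" for i
    using lines_in_sub[OF G_lsub[of i]] Fix_eq[OF that] unfolding q_def pts_def by simp
  have orb: "\<exists>a\<le>r. card (orbit_of \<sigma> P) = 2^a \<and> (\<forall>i. (\<sigma> ^^ (2^i)) P = P \<longleftrightarrow> a \<le> i)"
    if "P \<in> pts" for P
  proof -
    have M: "(2::nat)^r > 0" "(\<sigma> ^^ (2^r)) P = P" using ord that by auto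
    have "per \<sigma> P dvd 2^r" using per_dvd[OF M] M(2) by blast
    then obtain a where a: "a \<le> r" "per \<sigma> P = 2^a"
      using divides_primepow_nat[of 2 "per \<sigma> P" r] by auto
    have "(\<sigma> ^^ (2^i)) P = P \<longleftrightarrow> a \<le> i" for i
      using per_dvd[OF M, of "2^i"] a(2) dvd_power_iff_le[of 2 a i] by simp
    then show ?thesis using a orbit_card[OF M] by auto
  qed
  have cnt: "2^i * c i = card {P\<in>pts. card (orbit_of \<sigma> P) = 2^i}" for i
    unfolding c_def \<sigma>_def pts_def
    by (rule cycle_count_mult) (use sig_pts ord in \<open>auto simp: \<sigma>_def pts_def\<close>)
  have set0: "{P\<in>pts. card (orbit_of \<sigma> P) = 2^0} = Fix 0"
  proof (intro equalityI subsetI)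
    fix P assume P: "P \<in> {P\<in>pts. card (orbit_of \<sigma> P) = 2^0}"
    then obtain a where a: "card (orbit_of \<sigma> P) = 2^a" "(\<forall>i. (\<sigma> ^^ (2^i)) P = P \<longleftrightarrow> a \<le> i)"
      using orb by blast
    then have "(2::nat)^a = 2^0" using P by simp
    then have "a = 0" using power_inject_exp[of 2 a 0] by simp
    then have "(\<sigma> ^^ (2^0)) P = P" using a(2) by blast
    then show "P \<in> Fix 0" using P unfolding Fix_def by blast
  next
    fix P assume P: "P \<in> Fix 0"
    then obtain a where "card (orbit_of \<sigma> P) = 2^a" "(\<forall>i. (\<sigma> ^^ (2^i)) P = P \<longleftrightarrow> a \<le> i)"
      using orb unfolding Fix_def by blast
    then show "P \<in> {P\<in>pts. card (orbit_of \<sigma> P) = 2^0}" using P unfolding Fix_def by auto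
  qed
  have seti: "{P\<in>pts. card (orbit_of \<sigma> P) = 2^i} = Fix i - Fix (i - 1)" if "i \<ge> 1" for i
  proof (intro equalityI subsetI)
    fix P assume P: "P \<in> {P\<in>pts. card (orbit_of \<sigma> P) = 2^i}"
    then obtain a where "card (orbit_of \<sigma> P) = 2^a" "(\<forall>i. (\<sigma> ^^ (2^i)) P = P \<longleftrightarrow> a \<le> i)"
      using orb by blast
    then show "P \<in> Fix i - Fix (i - 1)" using P that unfolding Fix_def by auto
  next
    fix P assume P: "P \<in> Fix i - Fix (i - 1)"
    then obtain a where "card (orbit_of \<sigma> P) = 2^a" "(\<forall>i. (\<sigma> ^^ (2^i)) P = P \<longleftrightarrow> a \<le> i)"
      using orb unfolding Fix_def by blast
    then show "P \<in> {P\<in>pts. card (orbit_of \<sigma> P) = 2^i}" using P that unfolding Fix_def by auto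
  qed
  have Fix_mono: "Fix (i - 1) \<subseteq> Fix i" for i
  proof
    fix P assume P: "P \<in> Fix (i - 1)"
    then obtain a where "(\<forall>i. (\<sigma> ^^ (2^i)) P = P \<longleftrightarrow> a \<le> i)"
      using orb unfolding Fix_def by blast
    then show "P \<in> Fix i" using P unfolding Fix_def by auto
  qed
  have Gpos: "card (G i) \<ge> 1" for i
    using G_lsub[of i] unfolding lsub_def by (metis card_0_eq empty_iff finite less_one not_le)
  have c0eq: "(q - 1) * c 0 = card (G 0) - 1"
    using cnt[of 0] set0 Fix_card[of 0] by simp
  have cieq: "(q - 1) * (2^i * c i) = card (G i) - card (G (i - 1))" if "1 \<le> i" "i \<le> r" for i
  proof -
    have "2^i * c i = card (Fix i) - card (Fix (i - 1))"
      using cnt[of i] seti[OF that(1)] Fix_mono[of i] by (simp add: card_Diff_subset)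
    then have "(q - 1) * (2^i * c i) = (q - 1) * card (Fix i) - (q - 1) * card (Fix (i - 1))"
      by (simp add: diff_mult_distrib2)
    also have "\<dots> = (card (G i) - 1) - (card (G (i - 1)) - 1)"
      using Fix_card[of i] Fix_card[of "i - 1"] that by simp
    also have "\<dots> = card (G i) - card (G (i - 1))" using Gpos[of i] Gpos[of "i - 1"] by simp
    finally show ?thesis .
  qed
  have q1: "q - 1 > 0" "q > 1" using q(2) by linarith+
  have strict: "\<forall>j'<j. G j' \<noteq> G (Suc j')" if "G j \<noteq> G (Suc j)" for j
  proof (intro allI impI)
    fix j' assume "j' < j"
    show "G j' \<noteq> G (Suc j')"
    proof
      assume h: "G j' = G (Suc j')"
      have "G j = G j'" using Gstab[OF h, of j] \<open>j' < j\<close> by simp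
      moreover have "G (Suc j) = G j'" using Gstab[OF h, of "Suc j"] \<open>j' < j\<close> by simp
      ultimately show False using that by simp
    qed
  qed
  have ceven: "even (c i)" if i: "1 \<le> i" "i \<le> r" for i
  proof (cases "G (i - 1) = G i")
    case True
    then have "(q - 1) * (2^i * c i) = 0" using cieq[OF i] by simp
    then have "c i = 0" using q1 by simp
    then show ?thesis by simp
  next
    case False
    have si: "Suc (i - 1) = i" using i by simp
    obtain d where d: "card (G (i - 1)) = q^d" "d \<ge> i"
      using Gcard[OF strict[of "i - 1"]] False si by auto
    from sub_card[OF G_lsub G_lsub Gmono[of "i - 1" i]] obtain e where
      e: "card (G i) = card (G (i - 1)) * q^e" "G (i - 1) \<noteq> G i \<longrightarrow> e \<ge> 1"
      unfolding q_def by auto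
    have "(q - 1) * (2^i * c i) = q^d * q^e - q^d" using cieq[OF i] d e by simp
    also have "\<dots> = q^d * (q^e - 1)" by (simp add: diff_mult_distrib2)
    finally show ?thesis using even_ci[OF _ q(1) m2 d(2) i(1)] by blast
  qed
  have c0odd: "odd (c 0)"
  proof -
    obtain d where d: "card (G 0) = q^d" "d \<ge> 1" using Gcard[of 0] by auto
    show ?thesis using odd_c0[OF _ q(1) m2 d(2)] c0eq d(1) by simp
  qed
  have part1: "odd (c 0) \<and> even (\<Sum>i\<in>{1..r}. c i)"
    using c0odd ceven by (auto intro!: dvd_sum)
  have part2: "(let q = CARD('k);
           P1 = (c 0 = q + 1 \<and> (\<forall>i\<in>{1..r}. c i = 0));
           P2 = (c 0 = 1 \<and> (\<exists>!j. j \<in> {1..r} \<and> c j \<noteq> 0) \<and>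
                 (\<forall>j\<in>{1..r}. c j \<noteq> 0 \<longrightarrow>
                    real (c j) = real q / 2 ^ j \<and> real q / 2 ^ j > 1))
       in (P1 \<and> \<not> P2) \<or> (\<not> P1 \<and> P2))" if N: "CARD('n) = 2"
  proof -
    have univ: "card (UNIV :: ('k^'n) set) = q^2" using N unfolding q_def by simp
    have cG: "c i = 0" if "1 \<le> i" "i \<le> r" "G (i - 1) = G i" for i
    proof -
      have "(q - 1) * (2^i * c i) = 0" using cieq[OF that(1,2)] that(3) by simp
      then show ?thesis using q1 by simp
    qed
    show ?thesis
    proof (cases "G 0 = UNIV")
      case True
      then have "(q - 1) * c 0 = q^2 - 1" using c0eq univ by simp
      also have "q^2 - 1 = (q - 1) * (q + 1)" using q1 by (cases q) (simp_all add: power2_eq_square)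
      finally have "(q - 1) * c 0 = (q - 1) * (q + 1)" .
      then have "q - 1 = 0 \<or> c 0 = q + 1" by (simp only: mult_cancel_left)
      then have c0: "c 0 = q + 1" using q1(1) by simp
      have ci: "\<forall>i\<in>{1..r}. c i = 0"
      proof
        fix i assume "i \<in> {1..r}"
        moreover have "G (i - 1) = UNIV" "G i = UNIV" using True Gmono[of 0 "i - 1"] Gmono[of 0 i] by auto
        ultimately show "c i = 0" using cG by auto
      qed
      show ?thesis unfolding Let_def q_def[symmetric] using c0 ci q1 by auto
    next
      case False
      obtain d where d: "card (G 0) = q^d" "d \<ge> 1" using Gcard[of 0] by auto
      from sub_card[OF univ_lsub G_lsub[of 0]] obtain e where
        e: "card (UNIV :: ('k^'n) set) = card (G 0) * q^e" "G 0 \<noteq> UNIV \<longrightarrow> e \<ge> 1"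
        unfolding q_def by auto
      have "q^2 = q^(d + e)" using univ d e by (simp add: power_add)
      then have "2 = d + e" using power_inject_exp[OF q1(2)] by blast
      then have d1: "d = 1" using d(2) e(2) False by simp
      then have cG0: "card (G 0) = q" using d by simp
      have c0: "c 0 = 1" using c0eq cG0 q1 by simp
      define j where "j = (LEAST j. G j = UNIV)"
      have Gj: "G j = UNIV" unfolding j_def using LeastI[of "\<lambda>j. G j = UNIV" r] Gr by simp
      have jr: "j \<le> r" unfolding j_def using Least_le[of "\<lambda>j. G j = UNIV" r] Gr by simp
      have j1: "j \<ge> 1" using Gj False by (cases j) auto
      have below: "G i = G 0" if "i < j" for i
      proof -
        have ne: "G i \<noteq> UNIV" using not_less_Least[of i "\<lambda>j. G j = UNIV"] that unfolding j_def by blast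
        from sub_card[OF G_lsub G_lsub Gmono[of 0 i]] obtain a where
          a: "card (G i) = card (G 0) * q^a" "G 0 \<noteq> G i \<longrightarrow> a \<ge> 1" unfolding q_def by auto
        from sub_card[OF univ_lsub G_lsub[of i]] obtain b where
          b: "card (UNIV :: ('k^'n) set) = card (G i) * q^b" "G i \<noteq> UNIV \<longrightarrow> b \<ge> 1"
          unfolding q_def by auto
        have "q^2 = q^(1 + a + b)" using univ a b cG0 by (simp add: power_add)
        then have "2 = 1 + a + b" using power_inject_exp[OF q1(2)] by blast
        then have "a = 0" using b(2) ne by simp
        then show ?thesis using a(2) by auto
      qed
      have czero: "c i = 0" if "i \<in> {1..r}" "i \<noteq> j" for i
      proof (cases "i < j")
        case True
        then have "G i = G (i - 1)" using below[of i] below[of "i - 1"] by simp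
        then show ?thesis using cG that by auto
      next
        case False
        then have "j \<le> i - 1" using that by auto
        moreover have "j \<le> i" using \<open>j \<le> i - 1\<close> by simp
        ultimately have "G (i - 1) = UNIV" "G i = UNIV" using Gj Gmono[of j "i - 1"] Gmono[of j i] by auto
        then show ?thesis using cG that by auto
      qed
      have "(q - 1) * (2^j * c j) = q^2 - q"
        using cieq[OF j1 jr] Gj univ below[of "j - 1"] j1 cG0 by simp
      also have "\<dots> = (q - 1) * q" by (simp add: power2_eq_square algebra_simps)
      finally have cj: "2^j * c j = q" using q1 by simp
      have cjev: "even (c j)" using ceven[OF j1 jr] .
      have cjnz: "c j \<noteq> 0"
      proof
        assume "c j = 0" then have "q = 0" using cj by simp
        then show False using q1 by simp
      qed
      have cj2: "c j \<ge> 2" using cjev cjnz by presburger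
      have realcj: "real (c j) = real q / 2^j"
        using cj by (simp add: field_simps flip: of_nat_mult) (metis of_nat_mult of_nat_numeral of_nat_power mult.commute)
      have P2: "c 0 = 1 \<and> (\<exists>!j. j \<in> {1..r} \<and> c j \<noteq> 0) \<and>
                 (\<forall>j\<in>{1..r}. c j \<noteq> 0 \<longrightarrow>
                    real (c j) = real q / 2 ^ j \<and> real q / 2 ^ j > 1)"
      proof (intro conjI)
        show "c 0 = 1" by (rule c0)
        show "\<exists>!j. j \<in> {1..r} \<and> c j \<noteq> 0"
        proof (rule ex1I[of _ j])
          show "j \<in> {1..r} \<and> c j \<noteq> 0" using j1 jr cjnz by simp
        next
          fix y assume "y \<in> {1..r} \<and> c y \<noteq> 0"
          then show "y = j" using czero[of y] by auto
        qed
        show "\<forall>j'\<in>{1..r}. c j' \<noteq> 0 \<longrightarrow> real (c j') = real q / 2 ^ j' \<and> real q / 2 ^ j' > 1"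
        proof (intro ballI impI)
          fix j' assume "j' \<in> {1..r}" "c j' \<noteq> 0"
          then have "j' = j" using czero[of j'] by auto
          have gt1: "real (c j) > 1" using cj2 by simp
          show "real (c j') = real q / 2 ^ j' \<and> real q / 2 ^ j' > 1"
            unfolding \<open>j' = j\<close> realcj[symmetric] using gt1 by simp
        qed
      qed
      have notP1: "\<not> (c 0 = q + 1 \<and> (\<forall>i\<in>{1..r}. c i = 0))" using c0 q1 by simp
      show ?thesis unfolding Let_def q_def[symmetric] using P2 notP1 by blast
    qed
  qed
  show ?thesis using part1 part2 by blast
qed



end
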